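(* Let $n\ge 5$ and let $\sigma$ be a maximal simplex of $\Delta_n$. If $|N(w)\cap\sigma|\ge 2$ for all $w\in\sigma$, then there exists $\tilde v\in\sigma$ with $|N(\tilde v)\cap\sigma|\ge 3$.
   Context: $\mathbb{I}_n$ is the $n$-dimensional hypercube graph on vertex set $\{0,1\}^n$ (adjacent iff differing in exactly one coordinate), with Hamming distance $d(v,w)=\#\{i: v(i)\ne w(i)\}$. $\Delta_n=\mathcal{VR}(\mathbb{I}_n;3)$ is the simplicial complex whose simplices are the subsets $\sigma\subseteq\{0,1\}^n$ with $d(x,y)\le 3$ for all $x,y\in\sigma$. $N(v)$ denotes the set of the $n$ vertices adjacent to $v$ in $\mathbb{I}_n$. *)

theory Defs
  imports Main
begin

definition cube_vertices :: "nat \<Rightarrow> bool list set" where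
  "cube_vertices n = {v. length v = n}"

text \<open>Hamming distance (on lists of equal length).\<close>
definition hamming :: "bool list \<Rightarrow> bool list \<Rightarrow> nat" where
  "hamming v w = card {i. i < length v \<and> v ! i \<noteq> w ! i}"

text \<open>Simplices of Delta_n = VR(I_n; 3): nonempty sets of vertices of pairwise distance at most 3.\<close>
definition is_simplex :: "nat \<Rightarrow> bool list set \<Rightarrow> bool" where
  "is_simplex n \<sigma> \<longleftrightarrow> \<sigma> \<noteq> {} \<and> \<sigma> \<subseteq> cube_vertices n \<and>
      (\<forall>x\<in>\<sigma>. \<forall>y\<in>\<sigma>. hamming x y \<le> 3)"

definition is_maximal_simplex :: "nat \<Rightarrow> bool list set \<Rightarrow> bool" where
  "is_maximal_simplex n \<sigma> \<longleftrightarrow> is_simplex n \<sigma> \<and>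
      (\<forall>\<tau>. is_simplex n \<tau> \<and> \<sigma> \<subseteq> \<tau> \<longrightarrow> \<tau> = \<sigma>)"

definition nbhd :: "nat \<Rightarrow> bool list \<Rightarrow> bool list set" where
  "nbhd n v = {w \<in> cube_vertices n. hamming v w = 1}"

end

theory Submission
  imports Defs
begin

definition sd :: "nat set \<Rightarrow> nat set \<Rightarrow> nat set" where
  "sd S T = (S - T) \<union> (T - S)"

lemma sd_comm: "sd S T = sd T S" unfolding sd_def by auto
lemma sd_sd: "sd S (sd S T) = T" unfolding sd_def by auto
lemma sd_sub: "sd S T \<subseteq> S \<union> T" unfolding sd_def by auto

lemma core:
  fixes \<tau> :: "nat set set"
  assumes n: "n \<ge> 3" and e: "{} \<in> \<tau>" and sub: "\<forall>S\<in>\<tau>. S \<subseteq> {..<n}"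
    and dist: "\<forall>S\<in>\<tau>. \<forall>T\<in>\<tau>. card (sd S T) \<le> 3"
    and mx: "\<forall>S. S \<subseteq> {..<n} \<and> (\<forall>T\<in>\<tau>. card (sd S T) \<le> 3) \<longrightarrow> S \<in> \<tau>"
    and deg: "\<forall>S\<in>\<tau>. card {k. k<n \<and> sd S {k} \<in> \<tau>} = 2"
  shows False
proof -
  have fin: "finite S" if "S \<in> \<tau>" for S using sub that finite_subset by blast
  have finN: "finite {k. k<n \<and> P k}" for P by simp
  have "card {k. k<n \<and> sd {} {k} \<in> \<tau>} = 2" using deg e by blast
  then obtain i j where ij: "{k. k<n \<and> sd {} {k} \<in> \<tau>} = {i,j}" "i \<noteq> j"
    by (auto simp: card_2_iff)
  have sd0: "sd {} {k} = {k}" for k by (simp add: sd_def)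
  from ij have iin: "i<n" "{i}\<in>\<tau>" "j<n" "{j}\<in>\<tau>" by (auto simp: sd0 set_eq_iff)
  have only: "k = i \<or> k = j" if "k<n" "{k}\<in>\<tau>" for k
    using ij that by (auto simp: sd0 set_eq_iff)
  have c3: "card S \<le> 3" if "S\<in>\<tau>" for S
    using dist that e by (metis Diff_empty Un_empty_right empty_Diff sd_def)
  have three: "i\<in>S \<and> j\<in>S" if "S\<in>\<tau>" "card S = 3" for S
  proof (rule ccontr)
    assume "\<not> (i\<in>S \<and> j\<in>S)"
    then obtain x where x: "x \<in> {i,j}" "x \<notin> S" by auto
    then have "{x} \<in> \<tau>" using iin by auto
    moreover have "sd S {x} = insert x S" using x by (auto simp: sd_def)
    ultimately have "card (insert x S) \<le> 3" using dist that by metis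
    moreover have "card (insert x S) = 4" using x that fin by simp
    ultimately show False by simp
  qed
  have getm: "\<exists>m. m<n \<and> m\<noteq>i \<and> m\<noteq>j \<and> m\<noteq>k \<and> {i,j,m}\<in>\<tau>"
    if k: "k<n" "k\<noteq>i" "k\<noteq>j" for k
  proof -
    have "{k} \<notin> \<tau>" using only k by blast
    then obtain T where T: "T\<in>\<tau>" "\<not> card (sd {k} T) \<le> 3" using mx k by blast
    have kT: "k \<notin> T"
    proof
      assume "k \<in> T"
      then have "sd {k} T = T - {k}" by (auto simp: sd_def)
      then have "card (sd {k} T) \<le> card T" by (simp add: card_Diff1_le fin T(1))
      then show False using T c3 by fastforce
    qed
    then have "sd {k} T = insert k T" by (auto simp: sd_def)
    then have "card T = 3" using T kT c3[OF T(1)] fin[OF T(1)] by simp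
    then obtain a b c where abc: "T = {a,b,c}" "a\<noteq>b" "b\<noteq>c" "a\<noteq>c" by (auto simp: card_3_iff)
    have "i \<in> T" "j \<in> T" using three T \<open>card T = 3\<close> by auto
    then obtain m where m: "T = {i,j,m}" "m \<noteq> i" "m \<noteq> j"
      using abc ij(2) by auto
    have "m<n" using sub T m by auto
    moreover have "m \<noteq> k" using kT m by auto
    ultimately show ?thesis using m T by blast
  qed
  have "\<exists>k<3. k\<noteq>i \<and> k\<noteq>j" by presburger
  then obtain k0 where k0: "k0<n" "k0\<noteq>i" "k0\<noteq>j" using n by (meson less_le_trans)
  obtain m1 where m1: "m1<n" "m1\<noteq>i" "m1\<noteq>j" "{i,j,m1}\<in>\<tau>" using getm[OF k0] by blast
  obtain m2 where m2: "m2<n" "m2\<noteq>i" "m2\<noteq>j" "m2\<noteq>m1" "{i,j,m2}\<in>\<tau>" using getm[OF m1(1-3)] by blast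
  have notij: "{i,j} \<notin> \<tau>"
  proof
    assume a: "{i,j} \<in> \<tau>"
    have "sd {i,j} {i} = {j}" "sd {i,j} {j} = {i}" "sd {i,j} {m1} = {i,j,m1}" "sd {i,j} {m2} = {i,j,m2}"
      using ij(2) m1 m2 by (auto simp: sd_def)
    then have "{i,j,m1,m2} \<subseteq> {k. k<n \<and> sd {i,j} {k} \<in> \<tau>}"
      using iin m1 m2 by auto
    then have "card {i,j,m1,m2} \<le> card {k. k<n \<and> sd {i,j} {k} \<in> \<tau>}"
      by (intro card_mono) auto
    moreover have "card {i,j,m1,m2} = 4" using ij(2) m1 m2 by auto
    ultimately show False using deg a by simp
  qed
  have pairs: "{i,m}\<in>\<tau> \<and> {j,m}\<in>\<tau>" if m: "m<n" "m\<noteq>i" "m\<noteq>j" "{i,j,m}\<in>\<tau>" for m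
  proof -
    let ?N = "{k. k<n \<and> sd {i,j,m} {k} \<in> \<tau>}"
    have "?N \<subseteq> {i,j}"
    proof
      fix k assume "k \<in> ?N"
      then have k: "k<n" "sd {i,j,m} {k} \<in> \<tau>" by auto
      show "k \<in> {i,j}"
      proof (rule ccontr)
        assume nk: "k \<notin> {i,j}"
        show False
        proof (cases "k = m")
          case True
          then have "sd {i,j,m} {k} = {i,j}" using m by (auto simp: sd_def)
          then show False using k notij by simp
        next
          case False
          then have "sd {i,j,m} {k} = {i,j,m,k}" using nk by (auto simp: sd_def)
          moreover have "card {i,j,m,k} = 4" using nk False m ij(2) by auto
          ultimately show False using c3 k by fastforce
        qed
      qed
    qed
    moreover have "card ?N = 2" using deg m by blast
    moreover have "card {i,j} = 2" using ij(2) by simp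
    ultimately have "?N = {i,j}" by (metis card_subset_eq finite.emptyI finite.insertI)
    then have "i \<in> ?N" "j \<in> ?N" by auto
    moreover have "sd {i,j,m} {i} = {j,m}" "sd {i,j,m} {j} = {i,m}" using m ij(2) by (auto simp: sd_def)
    ultimately show ?thesis by auto
  qed
  have "{i,m1}\<in>\<tau>" "{j,m2}\<in>\<tau>" using pairs m1 m2 by auto
  then have "card (sd {i,m1} {j,m2}) \<le> 3" using dist by blast
  moreover have "sd {i,m1} {j,m2} = {i,m1,j,m2}" using m1 m2 ij(2) by (auto simp: sd_def)
  moreover have "card {i,m1,j,m2} = 4" using m1 m2 ij(2) by auto
  ultimately show False by simp
qed

definition flip :: "bool list \<Rightarrow> nat set \<Rightarrow> bool list" where
  "flip w S = map (\<lambda>i. if i \<in> S then \<not> w!i else w!i) [0..<length w]"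

definition dset :: "bool list \<Rightarrow> bool list \<Rightarrow> nat set" where
  "dset w v = {i. i < length w \<and> w!i \<noteq> v!i}"

lemma flip_len[simp]: "length (flip w S) = length w" by (simp add: flip_def)

lemma flip_nth: "i < length w \<Longrightarrow> flip w S ! i = (if i \<in> S then \<not> w!i else w!i)"
  by (simp add: flip_def)

lemma flip_dset: "length v = length w \<Longrightarrow> flip w (dset w v) = v"
  by (rule nth_equalityI) (auto simp: flip_nth dset_def)

lemma flip_neq: "i < length w \<Longrightarrow> (w!i \<noteq> flip w S ! i) = (i \<in> S)"
  by (simp add: flip_nth)

lemma flip_neq2: "i < length w \<Longrightarrow> (flip w S ! i \<noteq> flip w T ! i) = ((i \<in> S) \<noteq> (i \<in> T))"
  by (simp add: flip_nth)

lemma dset_sub: "dset w v \<subseteq> {..<length w}" by (auto simp: dset_def)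

lemma dset_flip: "dset w (flip w S) = S \<inter> {..<length w}"
proof -
  have "{i. i<length w \<and> w!i \<noteq> flip w S ! i} = {i. i < length w \<and> i\<in>S}" using flip_neq by blast
  then show ?thesis unfolding dset_def by auto
qed

lemma flip_inj: "S \<subseteq> {..<length w} \<Longrightarrow> T \<subseteq> {..<length w} \<Longrightarrow> flip w S = flip w T \<Longrightarrow> S = T"
  by (metis dset_flip inf.absorb1)

lemma ham_flip: "S \<subseteq> {..<length w} \<Longrightarrow> T \<subseteq> {..<length w} \<Longrightarrow>
   hamming (flip w S) (flip w T) = card (sd S T)"
proof -
  assume a: "S \<subseteq> {..<length w}" "T \<subseteq> {..<length w}"
  have "{i. i < length (flip w S) \<and> flip w S ! i \<noteq> flip w T ! i} = sd S T"
  proof -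
    have "{i. i < length w \<and> flip w S ! i \<noteq> flip w T ! i} = {i. i < length w \<and> ((i \<in> S) \<noteq> (i \<in> T))}"
      using flip_neq2 by blast
    also have "\<dots> = sd S T" using a by (auto simp: sd_def)
    finally show ?thesis by simp
  qed
  then show ?thesis by (simp add: hamming_def)
qed

theorem mainTheorem9:
  fixes n :: nat and \<sigma> :: "bool list set"
  assumes "n \<ge> 5"
    and "is_maximal_simplex n \<sigma>"
    and "\<forall>w\<in>\<sigma>. card (nbhd n w \<inter> \<sigma>) \<ge> 2"
  shows "\<exists>v\<in>\<sigma>. card (nbhd n v \<inter> \<sigma>) \<ge> 3"
proof (rule ccontr)
  assume neg: "\<not> ?thesis"
  have simp: "is_simplex n \<sigma>" and mxo: "\<And>\<tau>. is_simplex n \<tau> \<Longrightarrow> \<sigma> \<subseteq> \<tau> \<Longrightarrow> \<tau> = \<sigma>"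
    using assms(2) by (auto simp: is_maximal_simplex_def)
  then obtain w where w: "w \<in> \<sigma>" by (auto simp: is_simplex_def)
  have vlen: "length v = n" if "v \<in> \<sigma>" for v using simp that by (auto simp: is_simplex_def cube_vertices_def)
  have wl: "length w = n" using vlen w .
  define \<tau> where "\<tau> = {S. S \<subseteq> {..<n} \<and> flip w S \<in> \<sigma>}"
  have rep: "v = flip w (dset w v) \<and> dset w v \<in> \<tau>" if "v \<in> \<sigma>" for v
    using flip_dset[of v w] vlen[OF that] wl that dset_sub[of w v] by (auto simp: \<tau>_def)
  have e: "{} \<in> \<tau>"
  proof -
    have "dset w w = {}" by (auto simp: dset_def)
    then show ?thesis using rep[OF w] by simp
  qed
  have sub: "\<forall>S\<in>\<tau>. S \<subseteq> {..<n}" by (auto simp: \<tau>_def)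
  have dist: "\<forall>S\<in>\<tau>. \<forall>T\<in>\<tau>. card (sd S T) \<le> 3"
  proof (intro ballI)
    fix S T assume "S \<in> \<tau>" "T \<in> \<tau>"
    then have "S \<subseteq> {..<length w}" "T \<subseteq> {..<length w}" "flip w S \<in> \<sigma>" "flip w T \<in> \<sigma>"
      using wl by (auto simp: \<tau>_def)
    moreover have "\<forall>x\<in>\<sigma>. \<forall>y\<in>\<sigma>. hamming x y \<le> 3" using simp by (simp add: is_simplex_def)
    ultimately have "hamming (flip w S) (flip w T) \<le> 3" by blast
    then show "card (sd S T) \<le> 3" using ham_flip[of S w T] \<open>S \<subseteq> {..<length w}\<close> \<open>T \<subseteq> {..<length w}\<close> by simp
  qed
  have mx: "\<forall>S. S \<subseteq> {..<n} \<and> (\<forall>T\<in>\<tau>. card (sd S T) \<le> 3) \<longrightarrow> S \<in> \<tau>"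
  proof (intro allI impI)
    fix S assume a: "S \<subseteq> {..<n} \<and> (\<forall>T\<in>\<tau>. card (sd S T) \<le> 3)"
    let ?t = "insert (flip w S) \<sigma>"
    have all: "\<exists>X. X \<in> insert S \<tau> \<and> x = flip w X" if "x \<in> ?t" for x
    proof (cases "x = flip w S")
      case True then show ?thesis by blast
    next
      case False
      then have "x \<in> \<sigma>" using that by simp
      then have "dset w x \<in> insert S \<tau> \<and> x = flip w (dset w x)" using rep by simp
      then show ?thesis by (rule exI)
    qed
    have "is_simplex n ?t"
      unfolding is_simplex_def
    proof (intro conjI ballI)
      show "?t \<noteq> {}" by simp
      have "flip w S \<in> cube_vertices n" using wl by (simp add: cube_vertices_def)
      then show "?t \<subseteq> cube_vertices n" using simp unfolding is_simplex_def by blast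
    next
      fix x y assume xt: "x \<in> ?t" and yt: "y \<in> ?t"
      obtain X where X: "X \<in> insert S \<tau>" "x = flip w X" using all[OF xt] by blast
      obtain Y where Y: "Y \<in> insert S \<tau>" "y = flip w Y" using all[OF yt] by blast
      have XY: "X \<subseteq> {..<length w}" "Y \<subseteq> {..<length w}" using X(1) Y(1) a sub wl by auto
      have "card (sd X Y) \<le> 3"
      proof -
        consider "X = S" "Y = S" | "X = S" "Y \<in> \<tau>" | "X \<in> \<tau>" "Y = S" | "X \<in> \<tau>" "Y \<in> \<tau>"
          using X Y by blast
        then show ?thesis
        proof cases
          case 1 then show ?thesis by (simp add: sd_def)
        next
          case 2 then show ?thesis using a by simp
        next
          case 3 then show ?thesis using a sd_comm[of X Y] by simp
        next
          case 4 then show ?thesis using dist by blast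
        qed
      qed
      then show "hamming x y \<le> 3" using ham_flip[OF XY] X Y by simp
    qed
    then have "?t = \<sigma>" using mxo by blast
    then show "S \<in> \<tau>" using a by (auto simp: \<tau>_def)
  qed
  have deg: "\<forall>S\<in>\<tau>. card {k. k<n \<and> sd S {k} \<in> \<tau>} = 2"
  proof
    fix S assume S: "S \<in> \<tau>"
    let ?v = "flip w S"
    have Ss: "S \<subseteq> {..<n}" and vs: "?v \<in> \<sigma>" using S by (auto simp: \<tau>_def)
    have bij: "bij_betw (\<lambda>k. flip w (sd S {k})) {k. k<n \<and> sd S {k} \<in> \<tau>} (nbhd n ?v \<inter> \<sigma>)"
    proof (rule bij_betwI')
      fix x y assume "x \<in> {k. k<n \<and> sd S {k} \<in> \<tau>}" "y \<in> {k. k<n \<and> sd S {k} \<in> \<tau>}"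
      then have a1: "sd S {x} \<subseteq> {..<length w}" and a2: "sd S {y} \<subseteq> {..<length w}" using sub wl by auto
      have "(flip w (sd S {x}) = flip w (sd S {y})) = (sd S {x} = sd S {y})"
        using flip_inj[OF a1 a2] by auto
      also have "\<dots> = (x = y)" by (metis sd_sd singleton_inject)
      finally show "(flip w (sd S {x}) = flip w (sd S {y})) = (x = y)" .
    next
      fix x assume x: "x \<in> {k. k<n \<and> sd S {k} \<in> \<tau>}"
      then have xs: "sd S {x} \<subseteq> {..<length w}" using sub wl by auto
      have "hamming ?v (flip w (sd S {x})) = card (sd S (sd S {x}))"
        using ham_flip[of S w "sd S {x}"] Ss xs wl by simp
      also have "sd S (sd S {x}) = {x}" by (auto simp: sd_def)
      finally have "hamming ?v (flip w (sd S {x})) = 1" by simp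
      then show "flip w (sd S {x}) \<in> nbhd n ?v \<inter> \<sigma>" using x wl
        by (auto simp: nbhd_def cube_vertices_def \<tau>_def)
    next
      fix u assume u: "u \<in> nbhd n ?v \<inter> \<sigma>"
      then have "u \<in> \<sigma>" by simp
      then have ur: "u = flip w (dset w u)" "dset w u \<in> \<tau>" using rep by blast+
      have du: "dset w u \<subseteq> {..<length w}" by (rule dset_sub)
      have "hamming ?v u = 1" using u by (auto simp: nbhd_def)
      then have "card (sd S (dset w u)) = 1" using ham_flip[OF _ du, of S] Ss wl ur(1) by metis
      then obtain k where k: "sd S (dset w u) = {k}" by (auto simp: card_1_singleton_iff)
      have "sd S {k} = dset w u" using k sd_sd[of S "dset w u"] by simp
      moreover have "k < n" using k Ss du wl sd_sub[of S "dset w u"] by auto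
      ultimately show "\<exists>k \<in> {k. k<n \<and> sd S {k} \<in> \<tau>}. u = flip w (sd S {k})" using ur by (metis (mono_tags, lifting) mem_Collect_eq)
    qed
    have "card {k. k<n \<and> sd S {k} \<in> \<tau>} = card (nbhd n ?v \<inter> \<sigma>)" using bij_betw_same_card[OF bij] .
    moreover have "card (nbhd n ?v \<inter> \<sigma>) \<ge> 2" using assms(3) vs by blast
    moreover have "card (nbhd n ?v \<inter> \<sigma>) < 3" using neg vs by auto
    ultimately show "card {k. k<n \<and> sd S {k} \<in> \<tau>} = 2" by simp
  qed
  have n3: "3 \<le> n" using assms(1) by simp
  show False by (rule core[OF n3 e sub dist mx deg])
qed

end
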